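(* Let $\mathbb{V}$ be the variety in the language consisting of one binary operation symbol $*$ and two constant symbols $p$ and $0$, defined by the laws (writing $a*b*c$ for $(a*b)*c$) $$0*x = x*0 = 0,\qquad x*y*z = x*z*y,\qquad x*(y*z) = 0,\qquad x*y*y = 0.$$ Then $\mathbb{V}$ is a finitely based, locally finite variety which has uncountably many term clones.
   Context: Let $F_{\mathbb{V}}$ denote the free algebra in $\mathbb{V}$ on countably many generators $x_1, x_2, \ldots$. A term clone of $\mathbb{V}$ is a subset $S \subseteq F_{\mathbb{V}}$ which contains all the generators $x_1, x_2, \ldots$ and is closed under substitution: whenever $t(x_1,\ldots,x_n) \in S$ and $t_1,\ldots,t_n \in S$, then $t(t_1,\ldots,t_n) \in S$. (Equivalently, a term clone is a set of term functions of $F_{\mathbb{V}}$ containing all projections and closed under composition.) A variety is locally finite if every finitely generated algebra in it is finite, and finitely based if it is defined by finitely many laws. *)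

theory Defs
  imports Main "HOL-Library.Countable_Set"
begin

(* Terms in the language {*, p, 0}; variables x_1, x_2, ... are V 0, V 1, ... *)
datatype trm = V nat | Mul trm trm | P | Z

fun subst :: "(nat \<Rightarrow> trm) \<Rightarrow> trm \<Rightarrow> trm" where
  "subst \<sigma> (V i) = \<sigma> i"
| "subst \<sigma> (Mul s t) = Mul (subst \<sigma> s) (subst \<sigma> t)"
| "subst \<sigma> P = P"
| "subst \<sigma> Z = Z"

inductive ded :: "(trm \<times> trm) set \<Rightarrow> trm \<Rightarrow> trm \<Rightarrow> bool" for E where
  ax: "(s, t) \<in> E \<Longrightarrow> ded E (subst \<sigma> s) (subst \<sigma> t)"
| refl: "ded E t t"
| sym: "ded E s t \<Longrightarrow> ded E t s"
| trans: "ded E s t \<Longrightarrow> ded E t u \<Longrightarrow> ded E s u"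
| cong: "ded E s1 t1 \<Longrightarrow> ded E s2 t2 \<Longrightarrow> ded E (Mul s1 s2) (Mul t1 t2)"

definition lawsV :: "(trm \<times> trm) set" where
  "lawsV = {(Mul Z (V 0), Z),
            (Mul (V 0) Z, Z),
            (Mul (Mul (V 0) (V 1)) (V 2), Mul (Mul (V 0) (V 2)) (V 1)),
            (Mul (V 0) (Mul (V 1) (V 2)), Z),
            (Mul (Mul (V 0) (V 1)) (V 1), Z)}"

definition finitely_based_V :: bool where
  "finitely_based_V \<longleftrightarrow>
     (\<exists>E. finite E \<and> (\<forall>s t. ded E s t \<longleftrightarrow> ded lawsV s t))"

(* Algebras of the language: carrier A, binary op m, constants pc (for p) and zc (for 0) *)
fun eval :: "('a \<Rightarrow> 'a \<Rightarrow> 'a) \<Rightarrow> 'a \<Rightarrow> 'a \<Rightarrow> (nat \<Rightarrow> 'a) \<Rightarrow> trm \<Rightarrow> 'a" where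
  "eval m pc zc \<rho> (V i) = \<rho> i"
| "eval m pc zc \<rho> (Mul s t) = m (eval m pc zc \<rho> s) (eval m pc zc \<rho> t)"
| "eval m pc zc \<rho> P = pc"
| "eval m pc zc \<rho> Z = zc"

definition in_V :: "'a set \<Rightarrow> ('a \<Rightarrow> 'a \<Rightarrow> 'a) \<Rightarrow> 'a \<Rightarrow> 'a \<Rightarrow> bool" where
  "in_V A m pc zc \<longleftrightarrow> pc \<in> A \<and> zc \<in> A \<and> (\<forall>a\<in>A. \<forall>b\<in>A. m a b \<in> A) \<and>
     (\<forall>(s, t)\<in>lawsV. \<forall>\<rho>. (\<forall>i. \<rho> i \<in> A) \<longrightarrow> eval m pc zc \<rho> s = eval m pc zc \<rho> t)"

inductive_set gen :: "('a \<Rightarrow> 'a \<Rightarrow> 'a) \<Rightarrow> 'a \<Rightarrow> 'a \<Rightarrow> 'a set \<Rightarrow> 'a set"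
  for m pc zc X where
  base: "x \<in> X \<Longrightarrow> x \<in> gen m pc zc X"
| gp: "pc \<in> gen m pc zc X"
| gz: "zc \<in> gen m pc zc X"
| gm: "a \<in> gen m pc zc X \<Longrightarrow> b \<in> gen m pc zc X \<Longrightarrow> m a b \<in> gen m pc zc X"

definition finitely_generated :: "'a set \<Rightarrow> ('a \<Rightarrow> 'a \<Rightarrow> 'a) \<Rightarrow> 'a \<Rightarrow> 'a \<Rightarrow> bool" where
  "finitely_generated A m pc zc \<longleftrightarrow> (\<exists>X. finite X \<and> X \<subseteq> A \<and> gen m pc zc X = A)"

(* Locally finite (for algebras whose carrier lives in type 'a; the theorem is
   stated for an arbitrary type variable 'a, i.e. for all types) *)
definition locally_finite_V :: "'a itself \<Rightarrow> bool" where
  "locally_finite_V _ \<longleftrightarrow>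
     (\<forall>(A :: 'a set) m pc zc. in_V A m pc zc \<and> finitely_generated A m pc zc \<longrightarrow> finite A)"

(* Elements of the free algebra F_V on x_1, x_2, ...: equivalence classes of terms *)
definition cls :: "trm \<Rightarrow> trm set" where
  "cls t = {u. ded lawsV t u}"

definition FV :: "trm set set" where
  "FV = range cls"

definition term_clone :: "trm set set \<Rightarrow> bool" where
  "term_clone S \<longleftrightarrow> S \<subseteq> FV \<and> (\<forall>i. cls (V i) \<in> S) \<and>
     (\<forall>t \<sigma>. cls t \<in> S \<and> (\<forall>i. cls (\<sigma> i) \<in> S) \<longrightarrow> cls (subst \<sigma> t) \<in> S)"

end

theory Submission
  imports Defs
begin

lemma fb: "finitely_based_V"
  unfolding finitely_based_V_def
  by (rule exI[of _ lawsV]) (simp add: lawsV_def)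

section \<open>Locally finite\<close>

lemma inV_laws:
  assumes "in_V A m pc zc" "a \<in> A" "b \<in> A" "c \<in> A"
  shows "m zc a = zc" "m a zc = zc" "m (m a b) c = m (m a c) b"
        "m a (m b c) = zc" "m (m a b) b = zc"
proof -
  define \<rho> where "\<rho> = (\<lambda>i::nat. if i = 0 then a else if i = 1 then b else c)"
  have r: "\<forall>i. \<rho> i \<in> A" using assms unfolding \<rho>_def by auto
  have L: "\<And>s t. (s, t) \<in> lawsV \<Longrightarrow> eval m pc zc \<rho> s = eval m pc zc \<rho> t"
    using assms(1) r unfolding in_V_def by blast
  show "m zc a = zc" using L[of "Mul Z (V 0)" Z] by (simp add: lawsV_def \<rho>_def)
  show "m a zc = zc" using L[of "Mul (V 0) Z" Z] by (simp add: lawsV_def \<rho>_def)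
  show "m (m a b) c = m (m a c) b"
    using L[of "Mul (Mul (V 0) (V 1)) (V 2)" "Mul (Mul (V 0) (V 2)) (V 1)"]
    by (simp add: lawsV_def \<rho>_def)
  show "m a (m b c) = zc" using L[of "Mul (V 0) (Mul (V 1) (V 2))" Z]
    by (simp add: lawsV_def \<rho>_def)
  show "m (m a b) b = zc" using L[of "Mul (Mul (V 0) (V 1)) (V 1)" Z]
    by (simp add: lawsV_def \<rho>_def)
qed

lemma foldl_in:
  assumes "\<forall>a\<in>A. \<forall>b\<in>A. m a b \<in> A" "a0 \<in> A" "set l \<subseteq> A"
  shows "foldl m a0 l \<in> A"
  using assms(2,3)
proof (induction l arbitrary: a0)
  case Nil then show ?case by simp
next
  case (Cons x l) then show ?case using assms(1) by simp
qed

lemma foldl_dup: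
  assumes "in_V A m pc zc" "a0 \<in> A" "set l \<subseteq> A" "b \<in> set l"
  shows "m (foldl m a0 l) b = zc"
  using assms(3,4)
proof (induction l rule: rev_induct)
  case Nil then show ?case by simp
next
  case (snoc y l)
  have cl: "\<forall>a\<in>A. \<forall>b\<in>A. m a b \<in> A" using assms(1) unfolding in_V_def by blast
  have fA: "foldl m a0 l \<in> A" using foldl_in[OF cl assms(2)] snoc by simp
  show ?case
  proof (cases "b = y")
    case True
    then show ?thesis using inV_laws(5)[OF assms(1) fA, of y y] snoc by simp
  next
    case False
    then have "b \<in> set l" using snoc by simp
    then have "m (foldl m a0 l) b = zc" using snoc by simp
    moreover have "m (m (foldl m a0 l) y) b = m (m (foldl m a0 l) b) y"
      using inV_laws(3)[OF assms(1) fA, of y b] snoc by auto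
    moreover have "m zc y = zc" using inV_laws(1)[OF assms(1), of y y y] snoc by simp
    ultimately show ?thesis by simp
  qed
qed

lemma gen_sub:
  assumes "\<forall>a\<in>A. \<forall>b\<in>A. m a b \<in> A" "pc \<in> A" "zc \<in> A" "X \<subseteq> A"
  shows "gen m pc zc X \<subseteq> A"
proof
  fix x assume "x \<in> gen m pc zc X"
  then show "x \<in> A" by induction (use assms in auto)
qed

lemma lf: "locally_finite_V TYPE('a)"
  unfolding locally_finite_V_def
proof (intro allI impI, elim conjE)
  fix A :: "'a set" and m pc zc
  assume inV: "in_V A m pc zc" and fg: "finitely_generated A m pc zc"
  obtain X where X: "finite X" "X \<subseteq> A" "gen m pc zc X = A"
    using fg unfolding finitely_generated_def by blast
  have cl: "\<forall>a\<in>A. \<forall>b\<in>A. m a b \<in> A" and pA: "pc \<in> A" and zA: "zc \<in> A"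
    using inV unfolding in_V_def by auto
  define Y where "Y = insert pc X"
  have YA: "Y \<subseteq> A" using X pA Y_def by auto
  define Sf where "Sf = insert zc ((\<lambda>(a, l). foldl m a l) ` (Y \<times> {l. set l \<subseteq> Y \<and> distinct l}))"
  have fin: "finite Sf" unfolding Sf_def using X(1) Y_def
    by (intro finite_insert[THEN iffD2] finite_imageI finite_cartesian_product finite_subset_distinct) auto
  have "gen m pc zc X \<subseteq> Sf"
  proof
    fix x assume "x \<in> gen m pc zc X"
    then show "x \<in> Sf"
    proof induction
      case (base x)
      then have "(x, []) \<in> Y \<times> {l. set l \<subseteq> Y \<and> distinct l}" using Y_def by auto
      then show ?case unfolding Sf_def by (force intro: image_eqI[where x="(x, [])"])
    next
      case gp
      then have "(pc, []) \<in> Y \<times> {l. set l \<subseteq> Y \<and> distinct l}" using Y_def by auto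
      then show ?case unfolding Sf_def by (force intro: image_eqI[where x="(pc, [])"])
    next
      case gz then show ?case unfolding Sf_def by simp
    next
      case (gm a b)
      have aA: "a \<in> A" and bA: "b \<in> A" using gm.hyps X(3) by auto
      show ?case
      proof (cases "a = zc \<or> b = zc")
        case True
        then show ?thesis using inV_laws(1,2)[OF inV] aA bA zA unfolding Sf_def by auto
      next
        case False
        then obtain a0 l where a: "a0 \<in> Y" "set l \<subseteq> Y" "distinct l" "a = foldl m a0 l"
          using gm.IH(1) unfolding Sf_def by auto
        obtain b0 l' where b: "b0 \<in> Y" "set l' \<subseteq> Y" "distinct l'" "b = foldl m b0 l'"
          using gm.IH(2) False unfolding Sf_def by auto
        show ?thesis
        proof (cases l' rule: rev_exhaust)
          case Nil
          then have bb: "b = b0" using b by simp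
          show ?thesis
          proof (cases "b0 \<in> set l")
            case True
            then have "m a b = zc" using foldl_dup[OF inV, of a0 l b0] a bb YA by auto
            then show ?thesis unfolding Sf_def by simp
          next
            case False
            have "m a b = foldl m a0 (l @ [b0])" using a bb by simp
            moreover have "(a0, l @ [b0]) \<in> Y \<times> {l. set l \<subseteq> Y \<and> distinct l}"
              using a b False by auto
            ultimately show ?thesis unfolding Sf_def by (force intro: image_eqI[where x="(a0, l @ [b0])"])
          qed
        next
          case (snoc l0 v)
          have "b = m (foldl m b0 l0) v" using b snoc by simp
          moreover have "foldl m b0 l0 \<in> A" using foldl_in[OF cl, of b0 l0] b snoc YA by auto
          moreover have "v \<in> A" using b snoc YA by auto
          ultimately have "m a b = zc" using inV_laws(4)[OF inV aA] by auto
          then show ?thesis unfolding Sf_def by simp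
        qed
      qed
    qed
  qed
  then show "finite A" using fin X(3) finite_subset by auto
qed


section \<open>A model of V: normal forms\<close>

type_synonym M = "(trm \<times> trm set) option"

fun mm :: "M \<Rightarrow> M \<Rightarrow> M" where
  "mm (Some (a, B)) (Some (b, C)) = (if C = {} \<and> b \<notin> B then Some (a, insert b B) else None)"
| "mm _ _ = None"

definition pv :: M where "pv = Some (P, {})"

abbreviation ev :: "(nat \<Rightarrow> M) \<Rightarrow> trm \<Rightarrow> M" where
  "ev \<rho> t \<equiv> eval mm pv None \<rho> t"

lemma mm_None2[simp]: "mm x None = None"
  by (cases x) auto

lemma mm_3: "mm (mm x y) z = mm (mm x z) y"
  by (cases x; cases y; cases z) auto

lemma mm_4: "mm x (mm y z) = None"
  by (cases x; cases y; cases z) auto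

lemma mm_5: "mm (mm x y) y = None"
  by (cases x; cases y) auto

lemma eval_subst:
  "eval m pc zc \<rho> (subst \<sigma> t) = eval m pc zc (\<lambda>i. eval m pc zc \<rho> (\<sigma> i)) t"
  by (induction t) auto

lemma laws_M: "(s, t) \<in> lawsV \<Longrightarrow> ev \<rho> s = ev \<rho> t"
  by (auto simp: lawsV_def mm_3 mm_4 mm_5)

lemma sound: "ded lawsV s t \<Longrightarrow> ev \<rho> s = ev \<rho> t"
proof (induction arbitrary: \<rho> rule: ded.induct)
  case (ax s t \<sigma>)
  then show ?case by (simp add: eval_subst laws_M)
qed auto

definition hd' :: "M \<Rightarrow> trm" where "hd' v = fst (the v)"

definition hh :: "(trm \<Rightarrow> M) \<Rightarrow> M \<Rightarrow> M" where
  "hh g x = (case x of None \<Rightarrow> None | Some (a, B) \<Rightarrow>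
     (case g a of None \<Rightarrow> None | Some (a', B') \<Rightarrow>
        if (\<forall>b\<in>B. \<exists>c. g b = Some (c, {})) \<and> inj_on g B \<and> B' \<inter> (hd' \<circ> g) ` B = {}
        then Some (a', B' \<union> (hd' \<circ> g) ` B) else None))"

lemma hh_None[simp]: "hh g None = None"
  by (simp add: hh_def)

lemma hh_atom[simp]: "hh g (Some (a, {})) = g a"
  by (auto simp: hh_def split: option.splits)

lemma mm_nonatom:
  assumes "\<nexists>c. w = Some (c, {})" shows "mm z w = None"
proof (cases "z = None \<or> w = None")
  case True then show ?thesis by (cases z) auto
next
  case False
  then obtain z' w' where "z = Some z'" "w = Some w'" by auto
  moreover obtain a B where "z' = (a, B)" by (cases z')
  moreover obtain c D where "w' = (c, D)" by (cases w')
  ultimately have "z = Some (a, B)" "w = Some (c, D)" by auto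
  then show ?thesis using assms by auto
qed

lemma hh_nonatom:
  assumes "C \<noteq> {}" shows "mm z (hh g (Some (b, C))) = None"
proof -
  have "\<nexists>c. hh g (Some (b, C)) = Some (c, {})"
    using assms by (auto simp: hh_def split: option.splits if_splits)
  then show ?thesis by (rule mm_nonatom)
qed

lemma hh_hom: "hh g (mm x y) = mm (hh g x) (hh g y)"
proof (cases x)
  case None then show ?thesis by simp
next
  case (Some xa)
  obtain a B where x: "x = Some (a, B)" using Some by (cases xa) auto
  show ?thesis
  proof (cases y)
    case None then show ?thesis by simp
  next
    case (Some ya)
    obtain b C where y: "y = Some (b, C)" using Some by (cases ya) auto
    show ?thesis
    proof (cases "C = {}")
      case False
      then show ?thesis using x y hh_nonatom by simp
    next
      case C: True
      show ?thesis
      proof (cases "b \<in> B")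
        case True
        have L: "hh g (mm x y) = None" using x y C True by simp
        have "mm (hh g x) (hh g y) = None"
        proof (cases "hh g x")
          case None then show ?thesis by simp
        next
          case (Some r)
          obtain a' B' where gA: "g a = Some (a', B')"
            using Some x by (auto simp: hh_def split: option.splits)
          have cond: "(\<forall>b\<in>B. \<exists>c. g b = Some (c, {}))" and
            r: "r = (a', B' \<union> (hd' \<circ> g) ` B)"
            using Some x gA by (auto simp: hh_def split: if_splits)
          obtain c where gb: "g b = Some (c, {})" using cond True by blast
          have "c \<in> (hd' \<circ> g) ` B" using gb True by (force simp: hd'_def)
          then show ?thesis using Some r gb y C by simp
        qed
        then show ?thesis using L by simp
      next
        case False
        have L: "hh g (mm x y) = hh g (Some (a, insert b B))" using x y C False by simp
        show ?thesis
        proof (cases "g a")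
          case None then show ?thesis using L x by (simp add: hh_def)
        next
          case (Some r)
          obtain a' B' where gA: "g a = Some (a', B')" using Some by (cases r) auto
          show ?thesis
          proof (cases "\<exists>c. g b = Some (c, {})")
            case nb: False
            have "hh g (Some (a, insert b B)) = None" using gA nb by (simp add: hh_def)
            moreover have "mm z (g b) = None" for z using nb by (rule mm_nonatom)
            ultimately show ?thesis using L y C by simp
          next
            case True
            then obtain c where gb: "g b = Some (c, {})" by blast
            let ?cnd = "(\<forall>b\<in>B. \<exists>c. g b = Some (c, {})) \<and> inj_on g B \<and> B' \<inter> (hd' \<circ> g) ` B = {}"
            have hx: "hh g x = (if ?cnd then Some (a', B' \<union> (hd' \<circ> g) ` B) else None)"
              using x gA by (simp add: hh_def)
            have hi: "hh g (Some (a, insert b B)) = (if (\<forall>b\<in>insert b B. \<exists>c. g b = Some (c, {})) \<and> inj_on g (insert b B)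
                 \<and> B' \<inter> (hd' \<circ> g) ` (insert b B) = {}
               then Some (a', B' \<union> (hd' \<circ> g) ` (insert b B)) else None)"
              using gA by (simp add: hh_def)
            have eqv: "(\<forall>b\<in>B. \<exists>c. g b = Some (c, {})) \<Longrightarrow> (g b \<in> g ` B \<longleftrightarrow> c \<in> (hd' \<circ> g) ` B)"
            proof
              assume "g b \<in> g ` B" then show "c \<in> (hd' \<circ> g) ` B" using gb by (force simp: hd'_def)
            next
              assume at: "\<forall>b\<in>B. \<exists>c. g b = Some (c, {})" and "c \<in> (hd' \<circ> g) ` B"
              then obtain b' where b': "b' \<in> B" "hd' (g b') = c" by auto
              then obtain c' where "g b' = Some (c', {})" using at by blast
              then have "g b' = g b" using b' gb by (simp add: hd'_def)
              then show "g b \<in> g ` B" using b' by (metis image_eqI)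
            qed
            have hdb: "hd' (g b) = c" using gb by (simp add: hd'_def)
            show ?thesis
              using L y C hx hi gb eqv False hdb by (auto simp: inj_on_insert)
          qed
        qed
      qed
    qed
  qed
qed

lemma eval_hh: "ev \<rho> t = hh (\<lambda>a. ev \<rho> a) (ev (\<lambda>i. Some (V i, {})) t)"
proof (induction t)
  case (Mul s t)
  then show ?case by (simp add: hh_hom)
qed (auto simp: pv_def)


section \<open>Uncountably many clones\<close>

definition GN :: "nat set \<Rightarrow> M set" where
  "GN N = {None} \<union> range (\<lambda>i. Some (V i, {})) \<union>
     {Some (a, insert P Y) | a Y. (a = P \<or> (\<exists>i. a = V i)) \<and> Y \<subseteq> range V \<and> finite Y \<and> card Y \<in> N}"

lemma G_closed:
  assumes x: "x \<in> GN N" and gP: "g P = pv" and gV: "\<forall>i. g (V i) \<in> GN N"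
  shows "hh g x \<in> GN N"
proof (cases "hh g x = None")
  case True then show ?thesis by (simp add: GN_def)
next
  case nN: False
  show ?thesis
  proof (cases "x \<in> {None} \<union> range (\<lambda>i. Some (V i, {}))")
    case True
    have "None \<in> GN N" by (simp add: GN_def)
    then show ?thesis using True gV by auto
  next
    case False
    then have "x \<in> {Some (a, insert P Y) | a Y. (a = P \<or> (\<exists>i. a = V i)) \<and> Y \<subseteq> range V \<and> finite Y \<and> card Y \<in> N}"
      using x unfolding GN_def by (simp only: Un_iff) simp
    then obtain a Y where xa: "x = Some (a, insert P Y)" and a: "a = P \<or> (\<exists>i. a = V i)"
      and Y: "Y \<subseteq> range V" "finite Y" "card Y \<in> N"
      by (simp only: mem_Collect_eq) blast
    obtain a' B' where gA: "g a = Some (a', B')"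
      using nN xa by (auto simp: hh_def split: option.splits)
    let ?B = "insert P Y"
    have cond: "(\<forall>b\<in>?B. \<exists>c. g b = Some (c, {}))" "inj_on g ?B" "B' \<inter> (hd' \<circ> g) ` ?B = {}"
      and res: "hh g x = Some (a', B' \<union> (hd' \<circ> g) ` ?B)"
      using nN xa gA by (auto simp: hh_def split: if_splits)
    have hP: "hd' (g P) = P" using gP by (simp add: pv_def hd'_def)
    have PB: "P \<notin> B'" using cond(3) hP by auto
    have aB: "B' = {} \<and> (a' = P \<or> (\<exists>i. a' = V i))"
    proof (cases "a = P")
      case True then show ?thesis using gA gP by (simp add: pv_def)
    next
      case False
      then obtain i where "a = V i" using a by blast
      then have "g a \<in> GN N" using gV by simp
      then show ?thesis using gA PB unfolding GN_def by auto
    qed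
    have Yat: "\<forall>y\<in>Y. \<exists>k. g y = Some (V k, {})"
    proof
      fix y assume yY: "y \<in> Y"
      then obtain j where yj: "y = V j" using Y by auto
      have "g y \<in> GN N" using gV yj by simp
      moreover obtain c where "g y = Some (c, {})" using cond(1) yY by blast
      ultimately show "\<exists>k. g y = Some (V k, {})" unfolding GN_def by auto
    qed
    have img: "(hd' \<circ> g) ` Y \<subseteq> range V" using Yat by (force simp: hd'_def)
    have injY: "inj_on (hd' \<circ> g) Y"
    proof (rule inj_onI)
      fix u v assume "u \<in> Y" "v \<in> Y" "(hd' \<circ> g) u = (hd' \<circ> g) v"
      moreover then obtain ku kv where "g u = Some (V ku, {})" "g v = Some (V kv, {})" using Yat by blast
      ultimately have "g u = g v" by (simp add: hd'_def)
      then show "u = v" using cond(2) \<open>u \<in> Y\<close> \<open>v \<in> Y\<close> by (auto dest: inj_onD)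
    qed
    have cardY: "card ((hd' \<circ> g) ` Y) = card Y" using card_image[OF injY] .
    have "hh g x = Some (a', insert P ((hd' \<circ> g) ` Y))" using res aB hP by simp
    moreover have "Some (a', insert P ((hd' \<circ> g) ` Y)) \<in> {Some (a, insert P Y) | a Y. (a = P \<or> (\<exists>i. a = V i)) \<and> Y \<subseteq> range V \<and> finite Y \<and> card Y \<in> N}"
      apply (rule CollectI)
      apply (rule exI[of _ a'], rule exI[of _ "(hd' \<circ> g) ` Y"])
      using aB img Y cardY by simp
    ultimately show ?thesis unfolding GN_def by (simp only: Un_iff simp_thms)
  qed
qed

abbreviation nf :: "trm \<Rightarrow> M" where "nf t \<equiv> ev (\<lambda>i. Some (V i, {})) t"

definition SN :: "nat set \<Rightarrow> trm set set" where
  "SN N = cls ` {t. nf t \<in> GN N}"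

lemma cls_eq: "cls u = cls t \<Longrightarrow> nf u = nf t"
proof -
  assume e: "cls u = cls t"
  have "t \<in> cls t" by (simp add: cls_def ded.refl)
  then have "t \<in> cls u" using e by simp
  then have "ded lawsV u t" by (simp add: cls_def)
  then show ?thesis by (rule sound)
qed

lemma SN_mem: "cls u \<in> SN N \<longleftrightarrow> nf u \<in> GN N"
proof
  assume "cls u \<in> SN N"
  then obtain t where "cls u = cls t" "nf t \<in> GN N" unfolding SN_def by auto
  then show "nf u \<in> GN N" using cls_eq by metis
next
  assume "nf u \<in> GN N"
  then show "cls u \<in> SN N" unfolding SN_def by auto
qed

lemma SN_clone: "term_clone (SN N)"
  unfolding term_clone_def
proof (intro conjI allI impI)
  show "SN N \<subseteq> FV" by (auto simp: SN_def FV_def)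
next
  fix i show "cls (V i) \<in> SN N" by (simp add: SN_mem GN_def)
next
  fix t and \<sigma> :: "nat \<Rightarrow> trm" assume a: "cls t \<in> SN N \<and> (\<forall>i. cls (\<sigma> i) \<in> SN N)"
  let ?g = "\<lambda>a. ev (\<lambda>i. nf (\<sigma> i)) a"
  have "nf (subst \<sigma> t) = ev (\<lambda>i. nf (\<sigma> i)) t" by (simp add: eval_subst)
  also have "\<dots> = hh ?g (nf t)" by (rule eval_hh)
  finally have e: "nf (subst \<sigma> t) = hh ?g (nf t)" .
  have "hh ?g (nf t) \<in> GN N"
    by (rule G_closed) (use a SN_mem in auto)
  then show "cls (subst \<sigma> t) \<in> SN N" using e SN_mem by simp
qed

fun T :: "nat \<Rightarrow> trm" where
  "T 0 = Mul (V 0) P"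
| "T (Suc n) = Mul (T n) (V (Suc n))"

lemma nf_T: "nf (T n) = Some (V 0, insert P (V ` {1..n}))"
proof (induction n)
  case 0 then show ?case by (simp add: pv_def)
next
  case (Suc n)
  have "V (Suc n) \<notin> insert P (V ` {1..n})" by auto
  moreover have "insert P (V ` {1..Suc n}) = insert (V (Suc n)) (insert P (V ` {1..n}))"
    by (auto simp: atLeastAtMostSuc_conv)
  ultimately show ?case using Suc by simp
qed

lemma T_mem: "nf (T n) \<in> GN N \<longleftrightarrow> n \<in> N"
proof
  assume nN: "n \<in> N"
  have c: "card (V ` {1..n}) = n" by (simp add: card_image inj_on_def)
  have "Some (V 0, insert P (V ` {1..n})) \<in> {Some (a, insert P Y) | a Y. (a = P \<or> (\<exists>i. a = V i)) \<and> Y \<subseteq> range V \<and> finite Y \<and> card Y \<in> N}"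
    apply (rule CollectI)
    apply (rule exI[of _ "V 0"], rule exI[of _ "V ` {1..n}"])
    using c nN by (simp add: image_mono)
  then show "nf (T n) \<in> GN N" unfolding nf_T GN_def by (simp only: Un_iff simp_thms)
next
  assume m: "nf (T n) \<in> GN N"
  have "Some (V 0, insert P (V ` {1..n})) \<notin> {None} \<union> range (\<lambda>i. Some (V i, {}))" by auto
  then have "Some (V 0, insert P (V ` {1..n})) \<in> {Some (a, insert P Y) | a Y. (a = P \<or> (\<exists>i. a = V i)) \<and> Y \<subseteq> range V \<and> finite Y \<and> card Y \<in> N}"
    using m unfolding nf_T GN_def by (simp only: Un_iff) simp
  then obtain Y where Y: "insert P (V ` {1..n}) = insert P Y" "Y \<subseteq> range V" "card Y \<in> N"
    by (simp only: mem_Collect_eq) blast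
  have "P \<notin> Y" "P \<notin> V ` {1..n}" using Y(2) by auto
  then have "Y = V ` {1..n}" using Y(1)
    by (metis Diff_insert_absorb)
  moreover have "card (V ` {1..n}) = n" by (simp add: card_image inj_on_def)
  ultimately show "n \<in> N" using Y(3) by simp
qed

lemma SN_inj: "inj SN"
proof (rule injI)
  fix N1 N2 assume "SN N1 = SN N2"
  then have "\<forall>n. n \<in> N1 \<longleftrightarrow> n \<in> N2"
    using SN_mem[of "T _" N1] SN_mem[of "T _" N2] T_mem[of _ N1] T_mem[of _ N2] by simp
  then show "N1 = N2" by auto
qed

lemma nat_set_uncountable: "uncountable (UNIV :: nat set set)"
proof
  assume c: "countable (UNIV :: nat set set)"
  have "\<exists>f :: nat \<Rightarrow> nat set. range f = UNIV"
    using c uncountable_def[of "UNIV :: nat set set"] by simp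
  then obtain f :: "nat \<Rightarrow> nat set" where f: "range f = UNIV" by (erule exE)
  have "{n. n \<notin> f n} \<in> range f" using f by simp
  then obtain k where k: "{n. n \<notin> f n} = f k" by (erule rangeE)
  show False
  proof (cases "k \<in> f k")
    case True
    then have "k \<notin> {n. n \<notin> f n}" by simp
    then show False using True k by simp
  next
    case False
    then have "k \<in> {n. n \<notin> f n}" by simp
    then show False using False k by simp
  qed
qed

lemma unc: "uncountable {S. term_clone S}"
proof
  assume c: "countable {S. term_clone S}"
  have "range SN \<subseteq> {S. term_clone S}" using SN_clone by auto
  then have "countable (range SN)" using c by (rule countable_subset)
  then have "countable (UNIV :: nat set set)"
    by (rule countable_image_inj_on) (rule SN_inj)
  then show False using nat_set_uncountable by simp
qed

theorem mainTheorem1: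
  shows "finitely_based_V \<and> locally_finite_V TYPE('a) \<and>
         uncountable {S. term_clone S}"
  using fb lf unc by (intro conjI)

end
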